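(* Let $A,B$ be R$^*$-algebras and let $\phi\colon A\to B$ be a linear map such that $\phi(p)$ is a projection of $B$ for every projection $p$ of $A$. Then $\phi$ is a Jordan $^*$-homomorphism, i.e., $\phi(x^* )=\phi(x)^*$ and $\phi(x^2)=\phi(x)^2$ for all $x\in A$.
   Context: An R$^*$-algebra is a (not necessarily closed, not necessarily unital) $^*$-subalgebra of $B(H)$, $H$ a complex Hilbert space, in which every self-adjoint element has finite spectrum. A projection is an element $p$ with $p=p^2=p^*$. *)

theory Defs
  imports "HOL-Analysis.Analysis"
begin

text \<open>A complex inner product space: a real inner product space with a complex scalar
multiplication extending the real one and a complex inner product (conjugate-linear in the
first argument) whose real part is the underlying real inner product (so the norm is
\<open>sqrt (Re (cinner x x))\<close>).\<close>

class complex_inner = real_inner +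
  fixes scaleC :: "complex \<Rightarrow> 'a \<Rightarrow> 'a"
    and cinner :: "'a \<Rightarrow> 'a \<Rightarrow> complex"
  assumes scaleC_of_real: "scaleC (of_real r) x = scaleR r x"
    and scaleC_add_left: "scaleC (a + b) x = scaleC a x + scaleC b x"
    and scaleC_add_right: "scaleC a (x + y) = scaleC a x + scaleC a y"
    and scaleC_scaleC: "scaleC a (scaleC b x) = scaleC (a * b) x"
    and cinner_add_left: "cinner (x + y) z = cinner x z + cinner y z"
    and cinner_scaleC_left: "cinner (scaleC a x) y = cnj a * cinner x y"
    and cinner_commute: "cinner y x = cnj (cinner x y)"
    and Re_cinner: "Re (cinner x y) = inner x y"

class complex_hilbert = complex_inner + complete_space

definition bounded_op :: "('a::complex_hilbert \<Rightarrow> 'a) \<Rightarrow> bool" where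
  "bounded_op T \<longleftrightarrow>
     (\<forall>x y. T (x + y) = T x + T y) \<and>
     (\<forall>c x. T (scaleC c x) = scaleC c (T x)) \<and>
     (\<exists>K. \<forall>x. norm (T x) \<le> K * norm x)"

definition BH :: "('a::complex_hilbert \<Rightarrow> 'a) set" where
  "BH = {T. bounded_op T}"

text \<open>Hilbert space adjoint (exists uniquely for bounded operators).\<close>
definition adj :: "('a::complex_hilbert \<Rightarrow> 'a) \<Rightarrow> ('a \<Rightarrow> 'a)" where
  "adj T = (SOME S. \<forall>x y. cinner (T x) y = cinner x (S y))"

text \<open>Spectrum of an operator, computed in B(H).\<close>
definition op_spectrum :: "('a::complex_hilbert \<Rightarrow> 'a) \<Rightarrow> complex set" where
  "op_spectrum T = {l. \<not> (\<exists>S\<in>BH.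
       S \<circ> (\<lambda>x. T x - scaleC l x) = id \<and> (\<lambda>x. T x - scaleC l x) \<circ> S = id)}"

definition star_subalgebra :: "('a::complex_hilbert \<Rightarrow> 'a) set \<Rightarrow> bool" where
  "star_subalgebra A \<longleftrightarrow> A \<subseteq> BH \<and> (\<lambda>x. 0) \<in> A \<and>
     (\<forall>S\<in>A. \<forall>T\<in>A. (\<lambda>x. S x + T x) \<in> A) \<and>
     (\<forall>c. \<forall>T\<in>A. (\<lambda>x. scaleC c (T x)) \<in> A) \<and>
     (\<forall>S\<in>A. \<forall>T\<in>A. S \<circ> T \<in> A) \<and>
     (\<forall>T\<in>A. adj T \<in> A)"

definition R_star_algebra :: "('a::complex_hilbert \<Rightarrow> 'a) set \<Rightarrow> bool" where
  "R_star_algebra A \<longleftrightarrow> star_subalgebra A \<and>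
     (\<forall>T\<in>A. adj T = T \<longrightarrow> finite (op_spectrum T))"

definition is_projection :: "('a::complex_hilbert \<Rightarrow> 'a) \<Rightarrow> bool" where
  "is_projection p \<longleftrightarrow> p \<circ> p = p \<and> adj p = p"

definition linear_on_ops ::
  "('a::complex_hilbert \<Rightarrow> 'a) set \<Rightarrow> (('a \<Rightarrow> 'a) \<Rightarrow> ('b::complex_hilbert \<Rightarrow> 'b)) \<Rightarrow> bool" where
  "linear_on_ops A \<phi> \<longleftrightarrow>
     (\<forall>S\<in>A. \<forall>T\<in>A. \<phi> (\<lambda>x. S x + T x) = (\<lambda>y. \<phi> S y + \<phi> T y)) \<and>
     (\<forall>c. \<forall>T\<in>A. \<phi> (\<lambda>x. scaleC c (T x)) = (\<lambda>y. scaleC c (\<phi> T y)))"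

end

theory Submission
  imports Defs "HOL-Computational_Algebra.Fundamental_Theorem_Algebra"
begin


section \<open>Basic complex inner product facts\<close>


lemma scaleC_zero_right[simp]: fixes x y z :: "'a::complex_inner" shows "scaleC a 0 = 0"
proof -
  have "scaleC a 0 + scaleC a 0 = scaleC a 0 + 0" by (simp add: scaleC_add_right[symmetric])
  then show ?thesis by simp
qed

lemma scaleC_zero_left[simp]: fixes x y z :: "'a::complex_inner" shows "scaleC 0 x = 0"
  using scaleC_of_real[of 0 x] by simp

lemma scaleC_one[simp]: fixes x y z :: "'a::complex_inner" shows "scaleC 1 x = x"
  using scaleC_of_real[of 1 x] by simp

lemma scaleC_minus_right: fixes x y z :: "'a::complex_inner" shows "scaleC a (- x) = - scaleC a x"
proof -
  have "scaleC a (- x) + scaleC a x = 0" by (simp add: scaleC_add_right[symmetric])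
  then show ?thesis by (simp add: add_eq_0_iff2)
qed

lemma scaleC_minus_left: fixes x y z :: "'a::complex_inner" shows "scaleC (- a) x = - scaleC a x"
proof -
  have "scaleC (- a) x + scaleC a x = 0" by (simp add: scaleC_add_left[symmetric])
  then show ?thesis by (simp add: add_eq_0_iff2)
qed

lemma scaleC_diff_right: fixes x y z :: "'a::complex_inner" shows "scaleC a (x - y) = scaleC a x - scaleC a y"
  using scaleC_add_right[of a x "-y"] by (simp add: scaleC_minus_right)

lemma scaleC_diff_left: fixes x y z :: "'a::complex_inner" shows "scaleC (a - b) x = scaleC a x - scaleC b x"
  using scaleC_add_left[of a "-b" x] by (simp add: scaleC_minus_left)

lemma scaleC_sum_right: fixes x y z :: "'a::complex_inner" shows "scaleC a (sum f I) = (\<Sum>i\<in>I. scaleC a (f i))"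
  by (induction I rule: infinite_finite_induct) (auto simp: scaleC_add_right)

lemma scaleC_sum_left: fixes x y z :: "'a::complex_inner" shows "scaleC (sum f I) x = (\<Sum>i\<in>I. scaleC (f i) x)"
  by (induction I rule: infinite_finite_induct) (auto simp: scaleC_add_left)

lemma cinner_add_right: fixes x y z :: "'a::complex_inner" shows "cinner x (y + z) = cinner x y + cinner x z"
  by (subst (1 2 3) cinner_commute) (simp add: cinner_add_left)

lemma cinner_scaleC_right: fixes x y z :: "'a::complex_inner" shows "cinner x (scaleC a y) = a * cinner x y"
  by (subst (1 2) cinner_commute) (simp add: cinner_scaleC_left)

lemma cinner_zero_left[simp]: fixes x y z :: "'a::complex_inner" shows "cinner 0 y = 0"
proof -
  have "cinner 0 y + cinner 0 y = cinner 0 y + 0" by (simp add: cinner_add_left[symmetric])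
  then show ?thesis by simp
qed

lemma cinner_zero_right[simp]: fixes x y z :: "'a::complex_inner" shows "cinner x 0 = 0"
  by (subst cinner_commute) simp

lemma cinner_minus_left: fixes x y z :: "'a::complex_inner" shows "cinner (- x) y = - cinner x y"
proof -
  have "cinner (- x) y + cinner x y = 0" by (simp add: cinner_add_left[symmetric])
  then show ?thesis by (simp add: eq_neg_iff_add_eq_0)
qed

lemma cinner_minus_right: fixes x y z :: "'a::complex_inner" shows "cinner x (- y) = - cinner x y"
proof -
  have "cinner x (- y) + cinner x y = 0" by (simp add: cinner_add_right[symmetric])
  then show ?thesis by (simp add: eq_neg_iff_add_eq_0)
qed

lemma cinner_diff_left: fixes x y z :: "'a::complex_inner" shows "cinner (x - y) z = cinner x z - cinner y z"
  using cinner_add_left[of x "-y" z] by (simp add: cinner_minus_left)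

lemma cinner_diff_right: fixes x y z :: "'a::complex_inner" shows "cinner x (y - z) = cinner x y - cinner x z"
  using cinner_add_right[of x y "-z"] by (simp add: cinner_minus_right)

lemma cinner_sum_left: fixes x y z :: "'a::complex_inner" shows "cinner (sum f I) y = (\<Sum>i\<in>I. cinner (f i) y)"
  by (induction I rule: infinite_finite_induct) (auto simp: cinner_add_left)

lemma cinner_sum_right: fixes x y z :: "'a::complex_inner" shows "cinner x (sum f I) = (\<Sum>i\<in>I. cinner x (f i))"
  by (induction I rule: infinite_finite_induct) (auto simp: cinner_add_right)

lemma Im_cinner: fixes x y z :: "'a::complex_inner" shows "Im (cinner x y) = inner (scaleC \<i> x) y"
proof -
  have "inner (scaleC \<i> x) y = Re (cnj \<i> * cinner x y)"
    by (simp add: Re_cinner[symmetric] cinner_scaleC_left)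
  then show ?thesis by simp
qed

lemma cinner_eq_parts: fixes x y z :: "'a::complex_inner" shows "cinner x y = Complex (inner x y) (inner (scaleC \<i> x) y)"
  by (simp add: complex_eq_iff Re_cinner Im_cinner)

lemma cinner_self_real: fixes x y z :: "'a::complex_inner" shows "cinner x x = of_real (inner x x)"
proof -
  have "cinner x x = cnj (cinner x x)" by (rule cinner_commute)
  then have "Im (cinner x x) = - Im (cinner x x)" by (metis cnj.simps(2))
  then have "Im (cinner x x) = 0" by simp
  then show ?thesis by (simp add: complex_eq_iff Re_cinner)
qed

lemma cinner_self_eq_0: fixes x y z :: "'a::complex_inner" shows "cinner x x = 0 \<longleftrightarrow> x = 0"
  by (simp add: cinner_self_real)

lemma cinner_all_zero: fixes x y z :: "'a::complex_inner" shows "(\<And>y. cinner x y = 0) \<Longrightarrow> x = 0"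
  using cinner_self_eq_0 by blast

lemma cinner_all_zero_right: fixes x y z :: "'a::complex_inner" shows "(\<And>x. cinner x y = 0) \<Longrightarrow> y = 0"
  using cinner_self_eq_0 by blast

lemma scaleC_eq_0_iff: fixes x y z :: "'a::complex_inner" shows "scaleC a x = 0 \<longleftrightarrow> a = 0 \<or> x = 0"
proof
  assume "scaleC a x = 0"
  then have "cinner (scaleC a x) (scaleC a x) = 0" by simp
  then have "cnj a * (a * cinner x x) = 0" by (simp add: cinner_scaleC_left cinner_scaleC_right)
  then show "a = 0 \<or> x = 0" by (auto simp: cinner_self_eq_0)
qed auto



lemma parallelogram_inner:
  fixes a b :: "'a::real_inner"
  shows "inner (a - b) (a - b) + inner (a + b) (a + b) = 2 * inner a a + 2 * inner b b"
  by (simp add: inner_add_left inner_add_right inner_diff_left inner_diff_right inner_commute[of b a])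

lemma closest_ortho:
  fixes N :: "'a::{real_inner,complete_space} set"
  assumes cl: "closed N" and N0: "0 \<in> N"
    and Nadd: "\<And>a b. a \<in> N \<Longrightarrow> b \<in> N \<Longrightarrow> a + b \<in> N"
    and Nsc: "\<And>r a. a \<in> N \<Longrightarrow> r *\<^sub>R a \<in> N"
  shows "\<exists>n0\<in>N. \<forall>n\<in>N. inner (x0 - n0) n = 0"
proof -
  define Q where "Q = (\<lambda>n. inner (x0 - n) (x0 - n))"
  define D where "D = Inf (Q ` N)"
  have ne: "Q ` N \<noteq> {}" using N0 by auto
  have bdd: "bdd_below (Q ` N)" unfolding Q_def by (rule bdd_belowI[of _ 0]) auto
  have Dle: "D \<le> Q n" if "n \<in> N" for n
    unfolding D_def using that bdd by (auto intro: cInf_lower)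
  have "\<exists>n\<in>N. Q n < D + inverse (real (Suc k))" for k
  proof -
    have "Inf (Q ` N) < D + inverse (real (Suc k))" unfolding D_def by simp
    then show ?thesis using cInf_less_iff[OF ne bdd] by auto
  qed
  then obtain s where s: "\<And>k. s k \<in> N" "\<And>k. Q (s k) < D + inverse (real (Suc k))"
    by metis
  have par: "inner (s j - s k) (s j - s k) \<le> 2 * inverse (real (Suc j)) + 2 * inverse (real (Suc k))" for j k
  proof -
    define m where "m = (1/2) *\<^sub>R (s j + s k)"
    have mN: "m \<in> N" unfolding m_def using s Nadd Nsc by auto
    have e1: "(x0 - s k) - (x0 - s j) = s j - s k" by simp
    have e2: "(x0 - s k) + (x0 - s j) = 2 *\<^sub>R (x0 - m)" unfolding m_def
      by (simp add: algebra_simps scaleR_2)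
    have "inner (2 *\<^sub>R (x0 - m)) (2 *\<^sub>R (x0 - m)) = 4 * Q m" unfolding Q_def by simp
    then have "inner (s j - s k) (s j - s k) + 4 * Q m = 2 * Q (s k) + 2 * Q (s j)"
      using parallelogram_inner[of "x0 - s k" "x0 - s j"] unfolding e1 e2 Q_def by simp
    moreover have "D \<le> Q m" using Dle mN by blast
    ultimately show ?thesis using s(2)[of j] s(2)[of k] by linarith
  qed
  have "Cauchy s"
  proof (rule metric_CauchyI)
    fix e :: real assume "e > 0"
    then have "e^2/4 > 0" by simp
    then obtain M where M: "inverse (real (Suc M)) < e^2/4" using reals_Archimedean by blast
    show "\<exists>M. \<forall>m\<ge>M. \<forall>n\<ge>M. dist (s m) (s n) < e"
    proof (intro exI allI impI)
      fix m n assume "M \<le> m" "M \<le> n"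
      then have "inverse (real (Suc m)) \<le> inverse (real (Suc M))" "inverse (real (Suc n)) \<le> inverse (real (Suc M))"
        by (auto simp: field_simps)
      then have "inner (s m - s n) (s m - s n) < e^2"
        using par[of m n] M by linarith
      then have "(dist (s m) (s n))^2 < e^2"
        by (simp add: dist_norm power2_norm_eq_inner)
      then show "dist (s m) (s n) < e" using \<open>e > 0\<close>
        by (simp add: power_less_imp_less_base)
    qed
  qed
  then obtain L where L: "s \<longlonglongrightarrow> L" using Cauchy_convergent_iff convergent_def by blast
  have LN: "L \<in> N" using closed_sequentially[OF cl s(1) L] .
  have QL: "Q L \<le> D"
  proof (rule LIMSEQ_le)
    show "(\<lambda>k. Q (s k)) \<longlonglongrightarrow> Q L" unfolding Q_def by (intro tendsto_intros L)
    show "(\<lambda>k. D + inverse (real (Suc k))) \<longlonglongrightarrow> D"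
      using tendsto_add[OF tendsto_const LIMSEQ_inverse_real_of_nat, of D] by simp
    show "\<exists>N. \<forall>n\<ge>N. Q (s n) \<le> D + inverse (real (Suc n))" using s(2) less_imp_le by blast
  qed
  show ?thesis
  proof (intro bexI[OF _ LN] ballI)
    fix n assume nN: "n \<in> N"
    define z where "z = x0 - L"
    define c where "c = inner z n"
    define t where "t = c / (inner n n + 1)"
    have nn: "inner n n \<ge> 0" by simp
    have "L + t *\<^sub>R n \<in> N" using Nadd Nsc LN nN by blast
    then have "D \<le> Q (L + t *\<^sub>R n)" using Dle by blast
    also have "Q (L + t *\<^sub>R n) = inner (z - t *\<^sub>R n) (z - t *\<^sub>R n)"
      unfolding Q_def z_def by (simp add: algebra_simps)
    also have "\<dots> = inner z z - 2 * t * c + t^2 * inner n n"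
      unfolding c_def by (simp add: inner_diff_left inner_diff_right inner_commute[of n z] power2_eq_square algebra_simps)
    finally have "inner z z \<le> inner z z - 2 * t * c + t^2 * inner n n"
      using QL unfolding Q_def z_def by linarith
    then have le: "2 * t * c \<le> t^2 * inner n n" by linarith
    have "inner n n + 1 \<noteq> 0" using nn by linarith
    then have ts: "t * (inner n n + 1) = c" unfolding t_def by simp
    have "(2 * t * c) * (inner n n + 1)^2 \<le> (t^2 * inner n n) * (inner n n + 1)^2"
      using le by (rule mult_right_mono) simp
    then have "2 * (t * (inner n n + 1)) * c * (inner n n + 1) \<le> (t * (inner n n + 1))^2 * inner n n"
      by (simp add: algebra_simps power2_eq_square)
    then have "2 * c * c * (inner n n + 1) \<le> c * c * inner n n"
      unfolding ts by (simp add: power2_eq_square)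
    then have "(c * c) * (inner n n + 2) \<le> 0" by (simp add: algebra_simps)
    moreover have "inner n n + 2 > 0" using nn by linarith
    ultimately have "c * c \<le> 0" by (simp add: mult_le_0_iff)
    then have "c = 0" by (metis mult_eq_0_iff not_square_less_zero order_antisym_conv linorder_not_le)
    then show "inner (x0 - L) n = 0" unfolding c_def z_def .
  qed
qed

lemma riesz_real:
  fixes g :: "'a::{real_inner,complete_space} \<Rightarrow> real"
  assumes g: "bounded_linear g"
  shows "\<exists>w. \<forall>x. g x = inner x w"
proof (cases "\<forall>x. g x = 0")
  case True then show ?thesis by (intro exI[of _ 0]) simp
next
  case False
  then obtain x0 where x0: "g x0 \<noteq> 0" by blast
  interpret g: bounded_linear g by fact
  define N where "N = {x. g x = 0}"
  have cl: "closed N" unfolding N_def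
    by (intro closed_Collect_eq linear_continuous_on g continuous_on_const)
  obtain n0 where n0: "n0 \<in> N" "\<And>n. n \<in> N \<Longrightarrow> inner (x0 - n0) n = 0"
    using closest_ortho[OF cl, of x0] unfolding N_def by (auto simp: g.add g.scale)
  define z where "z = x0 - n0"
  have gz: "g z = g x0" using n0(1) unfolding z_def N_def by (simp add: g.diff)
  then have z0: "inner z z \<noteq> 0" using x0 by auto
  show ?thesis
  proof (intro exI[of _ "(g z / inner z z) *\<^sub>R z"] allI)
    fix x
    have "x - (g x / g z) *\<^sub>R z \<in> N" unfolding N_def using x0 gz by (simp add: g.diff g.scale)
    then have "inner z (x - (g x / g z) *\<^sub>R z) = 0" using n0(2) unfolding z_def by blast
    then have "inner z x = (g x / g z) * inner z z" by (simp add: inner_diff_right)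
    then show "g x = inner x ((g z / inner z z) *\<^sub>R z)"
      using z0 x0 gz by (simp add: inner_commute field_simps)
  qed
qed



lemma inner_scaleC_self: fixes x :: "'a::complex_inner"
  shows "inner (scaleC a x) (scaleC a x) = (cmod a)^2 * inner x x"
proof -
  have "cinner (scaleC a x) (scaleC a x) = (a * cnj a) * cinner x x"
    by (simp add: cinner_scaleC_left cinner_scaleC_right mult.commute)
  also have "\<dots> = of_real ((cmod a)^2 * inner x x)"
    by (simp add: complex_norm_square[symmetric] cinner_self_real)
  finally have "Re (cinner (scaleC a x) (scaleC a x)) = (cmod a)^2 * inner x x" by simp
  then show ?thesis by (simp add: Re_cinner)
qed

lemma norm_scaleC: fixes x :: "'a::complex_inner"
  shows "norm (scaleC a x) = cmod a * norm x"
  by (simp add: norm_eq_sqrt_inner inner_scaleC_self real_sqrt_mult)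

lemma scaleC_scaleR: fixes x :: "'a::complex_inner"
  shows "r *\<^sub>R x = scaleC (of_real r) x"
  by (simp add: scaleC_of_real)

section \<open>Bounded operators\<close>

lemma bop_add: "bounded_op T \<Longrightarrow> T (x + y) = T x + T y"
  unfolding bounded_op_def by blast
lemma bop_scaleC: "bounded_op T \<Longrightarrow> T (scaleC c x) = scaleC c (T x)"
  unfolding bounded_op_def by blast
lemma bop_zero: "bounded_op T \<Longrightarrow> T 0 = 0"
  using bop_scaleC[of T 0 0] by simp
lemma bop_minus: "bounded_op T \<Longrightarrow> T (- x) = - T x"
  using bop_add[of T x "-x"] bop_zero[of T] by (simp add: eq_neg_iff_add_eq_0 add.commute)
lemma bop_diff: "bounded_op T \<Longrightarrow> T (x - y) = T x - T y"
  using bop_add[of T x "-y"] bop_minus[of T y] by simp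
lemma bop_scaleR: "bounded_op T \<Longrightarrow> T (r *\<^sub>R x) = r *\<^sub>R T x"
  using bop_scaleC[of T "of_real r" x] by (simp add: scaleC_of_real)
lemma bop_sum: "bounded_op T \<Longrightarrow> T (sum f I) = (\<Sum>i\<in>I. T (f i))"
  by (induction I rule: infinite_finite_induct) (auto simp: bop_zero bop_add)
lemma bop_bound: "bounded_op T \<Longrightarrow> \<exists>K>0. \<forall>x. norm (T x) \<le> K * norm x"
proof -
  assume "bounded_op T"
  then obtain K where K: "\<forall>x. norm (T x) \<le> K * norm x" unfolding bounded_op_def by blast
  show ?thesis
  proof (intro exI[of _ "max K 1"] conjI allI)
    fix x show "norm (T x) \<le> max K 1 * norm x"
      using K[rule_format, of x] by (meson max.cobounded1 mult_right_mono norm_ge_zero order_trans)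
  qed simp
qed
lemma bop_bounded_linear: "bounded_op T \<Longrightarrow> bounded_linear T"
proof -
  assume T: "bounded_op T"
  then obtain K where K: "\<forall>x. norm (T x) \<le> K * norm x" unfolding bounded_op_def by blast
  show ?thesis
    by (rule bounded_linear_intro[of _ K]) (use T K in \<open>auto simp: bop_add bop_scaleR mult.commute\<close>)
qed

lemma bop_id: "bounded_op (\<lambda>x. x)"
  unfolding bounded_op_def by (auto intro: exI[of _ 1])
lemma bop_id': "bounded_op id"
  using bop_id by (simp add: id_def)
lemma bop_0: "bounded_op (\<lambda>x. 0)"
  unfolding bounded_op_def by (auto intro: exI[of _ 0])

lemma bop_plus: assumes "bounded_op S" "bounded_op T" shows "bounded_op (\<lambda>x. S x + T x)"
proof -
  obtain K1 where K1: "\<forall>x. norm (S x) \<le> K1 * norm x" using assms(1) unfolding bounded_op_def by blast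
  obtain K2 where K2: "\<forall>x. norm (T x) \<le> K2 * norm x" using assms(2) unfolding bounded_op_def by blast
  have b: "norm (S x + T x) \<le> (K1 + K2) * norm x" for x
    using norm_triangle_ineq[of "S x" "T x"] K1[rule_format, of x] K2[rule_format, of x]
    by (simp add: distrib_right)
  show ?thesis unfolding bounded_op_def
  proof (intro conjI allI exI[of _ "K1+K2"])
    fix x y show "S (x+y) + T (x+y) = (S x + T x) + (S y + T y)"
      using assms by (simp add: bop_add algebra_simps)
  next
    fix c x show "S (scaleC c x) + T (scaleC c x) = scaleC c (S x + T x)"
      using assms by (simp add: bop_scaleC scaleC_add_right)
  qed (rule b)
qed

lemma bop_smult: assumes "bounded_op T" shows "bounded_op (\<lambda>x. scaleC c (T x))"
proof -
  obtain K where K: "\<forall>x. norm (T x) \<le> K * norm x" using assms unfolding bounded_op_def by blast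
  have b: "norm (scaleC c (T x)) \<le> (cmod c * K) * norm x" for x
    using K[rule_format, of x] by (simp add: norm_scaleC mult.assoc mult_left_mono)
  show ?thesis unfolding bounded_op_def
  proof (intro conjI allI exI[of _ "cmod c * K"])
    fix x y show "scaleC c (T (x+y)) = scaleC c (T x) + scaleC c (T y)"
      using assms by (simp add: bop_add scaleC_add_right)
  next
    fix d x show "scaleC c (T (scaleC d x)) = scaleC d (scaleC c (T x))"
      using assms by (simp add: bop_scaleC scaleC_scaleC mult.commute)
  qed (rule b)
qed

lemma bop_comp: assumes "bounded_op S" "bounded_op T" shows "bounded_op (S \<circ> T)"
proof -
  obtain K1 where K1: "K1 > 0" "\<forall>x. norm (S x) \<le> K1 * norm x" using bop_bound[OF assms(1)] by blast
  obtain K2 where K2: "\<forall>x. norm (T x) \<le> K2 * norm x" using assms(2) unfolding bounded_op_def by blast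
  have "norm (S (T x)) \<le> (K1 * K2) * norm x" for x
    using K1(2)[rule_format, of "T x"] K2[rule_format, of x] K1(1)
    by (metis mult.assoc mult_left_mono order_trans less_imp_le)
  then show ?thesis using assms unfolding bounded_op_def by auto
qed

lemma bop_comp': "bounded_op S \<Longrightarrow> bounded_op T \<Longrightarrow> bounded_op (\<lambda>x. S (T x))"
  using bop_comp[of S T] by (simp add: comp_def)

lemma bop_minus_op: assumes "bounded_op S" "bounded_op T" shows "bounded_op (\<lambda>x. S x - T x)"
proof -
  have "bounded_op (\<lambda>x. S x + scaleC (-1) (T x))" by (intro bop_plus bop_smult assms)
  then show ?thesis by (simp add: scaleC_minus_left)
qed

lemma bop_scal: "bounded_op (\<lambda>x. scaleC c x)"
  using bop_smult[OF bop_id] .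

section \<open>Adjoints\<close>

definition has_adj :: "('a::complex_inner \<Rightarrow> 'a) \<Rightarrow> ('a \<Rightarrow> 'a) \<Rightarrow> bool" where
  "has_adj T S \<longleftrightarrow> (\<forall>x y. cinner (T x) y = cinner x (S y))"

lemma has_adjD: "has_adj T S \<Longrightarrow> cinner (T x) y = cinner x (S y)"
  unfolding has_adj_def by blast

lemma has_adj_sym: "has_adj T S \<Longrightarrow> has_adj S T"
  unfolding has_adj_def by (metis cinner_commute)

lemma has_adj_inner: "has_adj T S \<Longrightarrow> inner (T x) y = inner x (S y)"
  using has_adjD[of T S x y] by (metis Re_cinner)

lemma adj_unique: assumes "has_adj T S" shows "adj T = S"
proof -
  have ex: "\<exists>S. \<forall>x y. cinner (T x) y = cinner x (S y)" using assms unfolding has_adj_def by blast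
  have "\<forall>x y. cinner (T x) y = cinner x (adj T y)" unfolding adj_def by (rule someI_ex[OF ex])
  then have "has_adj T (adj T)" unfolding has_adj_def .
  then have "cinner x (adj T y - S y) = 0" for x y
    using assms by (simp add: has_adj_def cinner_diff_right)
  then show ?thesis by (intro ext) (metis cinner_all_zero_right eq_iff_diff_eq_0)
qed

lemma adj_exists: fixes T :: "'a::complex_hilbert \<Rightarrow> 'a"
  assumes T: "bounded_op T" shows "has_adj T (adj T)"
proof -
  have "\<exists>w. \<forall>x. inner (T x) y = inner x w" for y
  proof (rule riesz_real)
    show "bounded_linear (\<lambda>x. inner (T x) y)"
      using bounded_linear_compose[OF bounded_linear_inner_left bop_bounded_linear[OF T]] .
  qed
  then obtain W where W: "\<And>x y. inner (T x) y = inner x (W y)" by metis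
  have "has_adj T W" unfolding has_adj_def
  proof (intro allI)
    fix x y
    have "inner (scaleC \<i> (T x)) y = inner (scaleC \<i> x) (W y)"
      using W[of "scaleC \<i> x" y] by (simp add: bop_scaleC[OF T])
    then show "cinner (T x) y = cinner x (W y)"
      by (simp add: cinner_eq_parts W)
  qed
  then show ?thesis using adj_unique by metis
qed

lemma has_adj_plus: "has_adj S S' \<Longrightarrow> has_adj T T' \<Longrightarrow> has_adj (\<lambda>x. S x + T x) (\<lambda>y. S' y + T' y)"
  unfolding has_adj_def by (simp add: cinner_add_left cinner_add_right)

lemma has_adj_smult: "has_adj T T' \<Longrightarrow> has_adj (\<lambda>x. scaleC c (T x)) (\<lambda>y. scaleC (cnj c) (T' y))"
  unfolding has_adj_def by (simp add: cinner_scaleC_left cinner_scaleC_right)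

lemma has_adj_comp: "has_adj S S' \<Longrightarrow> has_adj T T' \<Longrightarrow> has_adj (S \<circ> T) (T' \<circ> S')"
  unfolding has_adj_def by simp

lemma has_adj_id: "has_adj (\<lambda>x. x) (\<lambda>x. x)"
  unfolding has_adj_def by simp

lemma has_adj_zero: "has_adj (\<lambda>x. 0) (\<lambda>x. 0)"
  unfolding has_adj_def by simp

lemma has_adj_sum: "(\<And>i. i \<in> I \<Longrightarrow> has_adj (T i) (S i)) \<Longrightarrow>
   has_adj (\<lambda>x. \<Sum>i\<in>I. T i x) (\<lambda>y. \<Sum>i\<in>I. S i y)"
  unfolding has_adj_def by (simp add: cinner_sum_left cinner_sum_right)

section \<open>Invertibility and spectrum\<close>

definition inv_op :: "('a::complex_hilbert \<Rightarrow> 'a) \<Rightarrow> bool" where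
  "inv_op U \<longleftrightarrow> (\<exists>S. bounded_op S \<and> S \<circ> U = id \<and> U \<circ> S = id)"

lemma op_spectrum_alt: "op_spectrum T = {l. \<not> inv_op (\<lambda>x. T x - scaleC l x)}"
  unfolding op_spectrum_def inv_op_def BH_def by auto

lemma inv_op_comp: assumes "inv_op U" "inv_op V" shows "inv_op (U \<circ> V)"
proof -
  obtain S where S: "bounded_op S" "S \<circ> U = id" "U \<circ> S = id" using assms(1) unfolding inv_op_def by blast
  obtain R where R: "bounded_op R" "R \<circ> V = id" "V \<circ> R = id" using assms(2) unfolding inv_op_def by blast
  have "(R \<circ> S) \<circ> (U \<circ> V) = R \<circ> (S \<circ> U) \<circ> V" by (simp add: comp_assoc)
  then have "(R \<circ> S) \<circ> (U \<circ> V) = id" using S R by simp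
  moreover have "(U \<circ> V) \<circ> (R \<circ> S) = U \<circ> (V \<circ> R) \<circ> S" by (simp add: comp_assoc)
  then have "(U \<circ> V) \<circ> (R \<circ> S) = id" using S R by simp
  ultimately show ?thesis unfolding inv_op_def using bop_comp[OF R(1) S(1)] by blast
qed

lemma inv_op_id: "inv_op (\<lambda>x. x)"
  unfolding inv_op_def using bop_id' by (auto simp: id_def fun_eq_iff)

lemma inv_op_smult: assumes "inv_op U" "c \<noteq> 0" "bounded_op U" shows "inv_op (\<lambda>x. scaleC c (U x))"
proof -
  obtain S where S: "bounded_op S" "S \<circ> U = id" "U \<circ> S = id" using assms(1) unfolding inv_op_def by blast
  have SU: "S (U x) = x" for x using S(2) by (metis comp_apply id_apply)
  have US: "U (S x) = x" for x using S(3) by (metis comp_apply id_apply)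
  have "bounded_op (\<lambda>x. S (scaleC (inverse c) x))" by (rule bop_comp'[OF S(1) bop_scal])
  moreover have "(\<lambda>x. S (scaleC (inverse c) x)) \<circ> (\<lambda>x. scaleC c (U x)) = id"
    using assms(2) by (simp add: fun_eq_iff scaleC_scaleC SU)
  moreover have "(\<lambda>x. scaleC c (U x)) \<circ> (\<lambda>x. S (scaleC (inverse c) x)) = id"
    using assms(2) by (simp add: fun_eq_iff scaleC_scaleC US bop_scaleC[OF assms(3)])
  ultimately show ?thesis unfolding inv_op_def by blast
qed



section \<open>Polynomials of operators\<close>

definition peval :: "complex poly \<Rightarrow> ('a::complex_hilbert \<Rightarrow> 'a) \<Rightarrow> 'a \<Rightarrow> 'a" where
  "peval p T x = (\<Sum>i<Suc (degree p). scaleC (coeff p i) ((T ^^ i) x))"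

lemma peval_gen: assumes "degree p < n"
  shows "peval p T x = (\<Sum>i<n. scaleC (coeff p i) ((T ^^ i) x))"
  unfolding peval_def
proof (rule sum.mono_neutral_left)
  show "{..<Suc (degree p)} \<subseteq> {..<n}" using assms by auto
  show "\<forall>i\<in>{..<n} - {..<Suc (degree p)}. scaleC (coeff p i) ((T ^^ i) x) = 0"
    by (auto simp: coeff_eq_0)
qed simp

lemma peval_0[simp]: "peval 0 T x = 0"
  unfolding peval_def by simp

lemma peval_pCons: assumes T: "bounded_op T"
  shows "peval (pCons a p) T x = scaleC a x + T (peval p T x)"
proof -
  have "degree (pCons a p) < Suc (Suc (degree p))" by (simp add: degree_pCons_le le_imp_less_Suc)
  then have "peval (pCons a p) T x = (\<Sum>i<Suc (Suc (degree p)). scaleC (coeff (pCons a p) i) ((T ^^ i) x))"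
    by (rule peval_gen)
  also have "\<dots> = scaleC a x + (\<Sum>i<Suc (degree p). scaleC (coeff p i) ((T ^^ Suc i) x))"
    by (subst sum.lessThan_Suc_shift) simp
  also have "(\<Sum>i<Suc (degree p). scaleC (coeff p i) ((T ^^ Suc i) x)) =
      (\<Sum>i<Suc (degree p). T (scaleC (coeff p i) ((T ^^ i) x)))"
    by (simp add: bop_scaleC[OF T])
  also have "\<dots> = T (peval p T x)" unfolding peval_def by (simp only: bop_sum[OF T])
  finally show ?thesis .
qed

context
  fixes T :: "'a::complex_hilbert \<Rightarrow> 'a"
  assumes T: "bounded_op T"
begin

lemma peval_add: "peval (p + q) T x = peval p T x + peval q T x"
proof (induction p arbitrary: q x rule: pCons_induct)
  case (pCons a p)
  show ?case
  proof (cases q rule: pCons_cases)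
    case (pCons b q')
    show ?thesis unfolding pCons add_pCons
      by (simp add: peval_pCons[OF T] pCons.IH bop_add[OF T] scaleC_add_left algebra_simps)
  qed
qed simp

lemma peval_smult: "peval (smult c p) T x = scaleC c (peval p T x)"
proof (induction p arbitrary: x rule: pCons_induct)
  case (pCons a p)
  show ?case
    by (simp add: peval_pCons[OF T] pCons.IH bop_scaleC[OF T] scaleC_add_right scaleC_scaleC)
qed simp

lemma peval_const: "peval [:c:] T x = scaleC c x"
  by (simp add: peval_pCons[OF T] bop_zero[OF T])

lemma peval_one: "peval 1 T x = x"
  using peval_const[of 1] by (simp add: one_pCons)

lemma peval_X: "peval [:0, 1:] T x = T x"
  by (simp add: peval_pCons[OF T] peval_const bop_zero[OF T])

lemma peval_linear: "peval [:-r, 1:] T x = T x - scaleC r x"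
  by (simp add: peval_pCons[OF T] peval_const scaleC_minus_left bop_zero[OF T])

lemma peval_mult: "peval (p * q) T x = peval p T (peval q T x)"
proof (induction p arbitrary: x rule: pCons_induct)
  case (pCons a p)
  show ?case
    by (simp add: mult_pCons_left peval_add peval_smult peval_pCons[OF T] pCons.IH)
qed simp

lemma peval_minus: "peval (- p) T x = - peval p T x"
  using peval_smult[of "-1" p x] by (simp add: scaleC_minus_left)

lemma peval_diff: "peval (p - q) T x = peval p T x - peval q T x"
  using peval_add[of p "- q" x] by (simp add: peval_minus)

lemma peval_sum: "peval (\<Sum>i\<in>I. f i) T x = (\<Sum>i\<in>I. peval (f i) T x)"
  by (induction I rule: infinite_finite_induct) (auto simp: peval_add)

lemma peval_bop: "bounded_op (peval p T)"
proof (induction p rule: pCons_induct)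
  case 0
  then show ?case using bop_0 by (simp add: fun_eq_iff)
next
  case (pCons a p)
  have "bounded_op (\<lambda>x. scaleC a x + T (peval p T x))"
    by (rule bop_plus[OF bop_scal bop_comp'[OF T pCons.IH]])
  then show ?case by (simp add: peval_pCons[OF T])
qed

lemma peval_commute: "T (peval p T x) = peval p T (T x)"
proof -
  have "peval ([:0,1:] * p) T x = peval (p * [:0,1:]) T x" by (metis mult.commute)
  then show ?thesis by (simp only: peval_mult peval_X)
qed

lemma peval_eigen: assumes "T v = scaleC l v" shows "peval p T v = scaleC (poly p l) v"
proof (induction p rule: pCons_induct)
  case (pCons a p)
  show ?case
    by (simp add: peval_pCons[OF T] pCons.IH bop_scaleC[OF T] assms scaleC_scaleC scaleC_add_left mult.commute)
qed simp

lemma peval_selfadj: assumes "has_adj T T" "\<forall>i. cnj (coeff p i) = coeff p i"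
  shows "has_adj (peval p T) (peval p T)"
  using assms(2)
proof (induction p rule: pCons_induct)
  case 0
  then show ?case using has_adj_zero by (simp add: fun_eq_iff)
next
  case (pCons a p)
  have ca: "cnj a = a" using pCons.prems[rule_format, of 0] by simp
  have cp: "\<forall>i. cnj (coeff p i) = coeff p i" using pCons.prems[rule_format, of "Suc i" for i] by simp
  have h1: "has_adj (T \<circ> peval p T) (peval p T \<circ> T)"
    by (rule has_adj_comp[OF assms(1) pCons.IH[OF cp]])
  have "peval p T \<circ> T = T \<circ> peval p T" by (simp add: fun_eq_iff peval_commute)
  with h1 have h2: "has_adj (\<lambda>x. T (peval p T x)) (\<lambda>x. T (peval p T x))" by (simp add: comp_def)
  have "has_adj (\<lambda>x. scaleC a x + T (peval p T x)) (\<lambda>x. scaleC a x + T (peval p T x))"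
    using has_adj_plus[OF has_adj_smult[OF has_adj_id, of a] h2] ca by simp
  then show ?case by (simp add: peval_pCons[OF T] fun_eq_iff)
qed

lemma peval_inA: assumes A: "star_subalgebra A" and TA: "T \<in> A"
  shows "(\<lambda>x. T (peval p T x)) \<in> A"
proof (induction p rule: pCons_induct)
  case 0
  have "(\<lambda>x. 0) \<in> A" using A unfolding star_subalgebra_def by blast
  then show ?case by (simp add: bop_zero[OF T])
next
  case (pCons a p)
  have c: "\<forall>S\<in>A. \<forall>T\<in>A. (\<lambda>x. S x + T x) \<in> A" "\<forall>c. \<forall>T\<in>A. (\<lambda>x. scaleC c (T x)) \<in> A"
     "\<forall>S\<in>A. \<forall>T\<in>A. S \<circ> T \<in> A" using A unfolding star_subalgebra_def by blast+
  have "T \<circ> (\<lambda>x. T (peval p T x)) \<in> A" using c(3) TA pCons.IH by blast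
  then have "(\<lambda>x. scaleC a (T x) + T (T (peval p T x))) \<in> A"
    using c(1) c(2) TA by (simp add: comp_def)
  then show ?case by (simp add: peval_pCons[OF T] bop_add[OF T] bop_scaleC[OF T])
qed

lemma peval_prod_inv: fixes n :: nat assumes "\<And>i. i < n \<Longrightarrow> inv_op (\<lambda>x. T x - scaleC (r i) x)"
  shows "inv_op (peval (\<Prod>i<n. [:-r i, 1:]) T)"
  using assms
proof (induction n)
  case 0
  then show ?case using inv_op_id by (simp add: peval_one)
next
  case (Suc n)
  have "inv_op (peval (\<Prod>i<n. [:-r i, 1:]) T \<circ> peval [:-r n, 1:] T)"
  proof (rule inv_op_comp)
    show "inv_op (peval (\<Prod>i<n. [:-r i, 1:]) T)" using Suc by auto
    have "peval [:-r n, 1:] T = (\<lambda>x. T x - scaleC (r n) x)" by (simp add: fun_eq_iff peval_linear)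
    then show "inv_op (peval [:-r n, 1:] T)" using Suc.prems[of n] by simp
  qed
  moreover have "peval (\<Prod>i<Suc n. [:-r i, 1:]) T = peval (\<Prod>i<n. [:-r i, 1:]) T \<circ> peval [:-r n, 1:] T"
    by (simp only: prod.lessThan_Suc fun_eq_iff peval_mult comp_apply) blast
  ultimately show ?case by (simp only:)
qed

lemma spec_map: assumes "degree p \<ge> 1" "\<forall>z\<in>op_spectrum T. poly p z \<noteq> \<mu>"
  shows "inv_op (\<lambda>x. peval p T x - scaleC \<mu> x)"
proof -
  define q where "q = p - [:\<mu>:]"
  have "p - [:\<mu>:] = p + [:-\<mu>:]" by simp
  then have dq: "degree q = degree p" unfolding q_def using assms(1)
    by (simp only:) (rule degree_add_eq_left, simp)
  then have q0: "q \<noteq> 0" using assms(1) by auto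
  obtain root where dec: "smult (lead_coeff q) (\<Prod>i<degree q. [:-root i, 1:]) = q"
    using complex_poly_decompose' by blast
  have roots: "poly q (root i) = 0" if "i < degree q" for i
  proof -
    have "poly q (root i) = lead_coeff q * (\<Prod>j<degree q. poly [:-root j, 1:] (root i))"
      by (subst dec[symmetric]) (simp add: poly_prod)
    also have "\<dots> = 0" using that by (intro mult_eq_0_iff[THEN iffD2] disjI2 prod_zero) auto
    finally show ?thesis .
  qed
  have "inv_op (peval (\<Prod>i<degree q. [:-root i, 1:]) T)"
  proof (rule peval_prod_inv)
    fix i assume "i < degree q"
    then have "poly p (root i) = \<mu>" using roots[of i] unfolding q_def by simp
    then have "root i \<notin> op_spectrum T" using assms(2) by blast
    then show "inv_op (\<lambda>x. T x - scaleC (root i) x)" unfolding op_spectrum_alt by simp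
  qed
  then have "inv_op (\<lambda>x. scaleC (lead_coeff q) (peval (\<Prod>i<degree q. [:-root i, 1:]) T x))"
    using q0 by (intro inv_op_smult peval_bop) auto
  moreover have "(\<lambda>x. scaleC (lead_coeff q) (peval (\<Prod>i<degree q. [:-root i, 1:]) T x)) = peval q T"
    by (subst (3) dec[symmetric]) (simp add: fun_eq_iff peval_smult)
  moreover have "peval q T = (\<lambda>x. peval p T x - scaleC \<mu> x)"
    unfolding q_def by (simp add: fun_eq_iff peval_diff peval_const)
  ultimately show ?thesis by simp
qed

end



lemma quad_disc:
  fixes a c d :: real
  assumes d: "d \<ge> 0" and q: "\<And>t. 0 \<le> a + 2 * t * c + t^2 * d"
  shows "c^2 \<le> a * d"
proof (cases "d = 0")
  case True
  show ?thesis
  proof (cases "c = 0")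
    case False
    have "0 \<le> a + 2 * (-(a+1)/(2*c)) * c + (-(a+1)/(2*c))^2 * d" by (rule q)
    then have "0 \<le> a - (a + 1)" using False True by (simp add: field_simps)
    then show ?thesis by simp
  qed (use True in simp)
next
  case False
  then have dp: "d > 0" using d by simp
  have "0 \<le> a + 2 * (-c/d) * c + (-c/d)^2 * d" by (rule q)
  then have "0 \<le> a - c^2/d" using dp by (simp add: field_simps power2_eq_square)
  then have "0 \<le> a * d - c^2" using dp by (simp add: field_simps)
  then show ?thesis by simp
qed

lemma pos_cs:
  fixes P :: "'a::complex_hilbert \<Rightarrow> 'a"
  assumes P: "bounded_op P" and sym: "\<And>x y. inner (P x) y = inner x (P y)"
    and pos: "\<And>x. inner (P x) x \<ge> 0"
  shows "(inner (P x) y)^2 \<le> inner (P x) x * inner (P y) y"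
proof (rule quad_disc[OF pos])
  fix t :: real
  have "inner (P y) x = inner (P x) y" using sym[of y x] by (simp add: inner_commute)
  then have "inner (P (x + t *\<^sub>R y)) (x + t *\<^sub>R y) = inner (P x) x + 2 * t * inner (P x) y + t^2 * inner (P y) y"
    by (simp add: bop_add[OF P] bop_scaleR[OF P] inner_add_left inner_add_right power2_eq_square algebra_simps)
  then show "0 \<le> inner (P x) x + 2 * t * inner (P x) y + t^2 * inner (P y) y"
    using pos[of "x + t *\<^sub>R y"] by simp
qed

lemma pos_inv_bound:
  fixes P :: "'a::complex_hilbert \<Rightarrow> 'a"
  assumes P: "bounded_op P" and sym: "\<And>x y. inner (P x) y = inner x (P y)"
    and pos: "\<And>x. inner (P x) x \<ge> 0" and inv: "inv_op P"
  shows "\<exists>\<delta>>0. \<forall>x. \<delta> * (norm x)^2 \<le> inner (P x) x"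
proof -
  obtain R where R: "bounded_op R" "R \<circ> P = id" using inv unfolding inv_op_def by blast
  obtain KR where KR: "KR > 0" "\<And>y. norm (R y) \<le> KR * norm y" using bop_bound[OF R(1)] by blast
  obtain KP where KP: "KP > 0" "\<And>y. norm (P y) \<le> KP * norm y" using bop_bound[OF P] by blast
  have RP: "R (P x) = x" for x using R(2) by (metis comp_apply id_apply)
  have main: "(norm x)^2 \<le> (KR^2 * KP) * inner (P x) x" for x
  proof (cases "P x = 0")
    case True
    then have "x = 0" using RP[of x] bop_zero[OF R(1)] by simp
    then show ?thesis by simp
  next
    case False
    define y where "y = P x"
    have ny: "norm y > 0" using False unfolding y_def by simp
    have "(inner y y)^2 \<le> inner (P x) x * inner (P y) y"
      using pos_cs[OF P sym pos, of x y] unfolding y_def by simp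
    also have "inner (P y) y \<le> KP * (norm y)^2"
    proof -
      have "inner (P y) y \<le> norm (P y) * norm y" by (rule norm_cauchy_schwarz)
      also have "\<dots> \<le> KP * norm y * norm y" using KP(2)[of y] by (simp add: mult_right_mono)
      finally show ?thesis by (simp add: power2_eq_square mult.assoc)
    qed
    then have "inner (P x) x * inner (P y) y \<le> inner (P x) x * (KP * (norm y)^2)"
      using pos[of x] by (rule mult_left_mono)
    finally have "((norm y)^2)^2 \<le> inner (P x) x * (KP * (norm y)^2)"
      by (simp add: power2_norm_eq_inner)
    then have "(norm y)^2 * (norm y)^2 \<le> (KP * inner (P x) x) * (norm y)^2"
      by (simp add: power2_eq_square algebra_simps)
    moreover have "(norm y)^2 > 0" using ny by simp
    ultimately have ny2: "(norm y)^2 \<le> KP * inner (P x) x" using mult_le_cancel_right_pos by blast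
    have "norm x \<le> KR * norm y" using KR(2)[of y] RP[of x] unfolding y_def by simp
    then have "(norm x)^2 \<le> (KR * norm y)^2" by (simp add: power_mono)
    also have "\<dots> = KR^2 * (norm y)^2" by (simp add: power_mult_distrib)
    also have "\<dots> \<le> KR^2 * (KP * inner (P x) x)" using ny2 by (simp add: mult_left_mono)
    finally show ?thesis by (simp add: mult.assoc)
  qed
  show ?thesis
  proof (intro exI[of _ "1 / (KR^2 * KP)"] conjI allI)
    show "1 / (KR^2 * KP) > 0" using KR KP by simp
    fix x
    have "(norm x)^2 / (KR^2 * KP) \<le> inner (P x) x"
      using main[of x] KR KP by (simp add: divide_le_eq mult.commute)
    then show "1 / (KR^2 * KP) * (norm x)^2 \<le> inner (P x) x" by simp
  qed
qed

lemma sup_in_spec: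
  fixes S :: "'a::complex_hilbert \<Rightarrow> 'a"
  assumes S: "bounded_op S" and sa: "has_adj S S" and nt: "\<exists>x::'a. x \<noteq> 0"
  shows "\<exists>M. complex_of_real M \<in> op_spectrum S \<and> (\<forall>x. inner (S x) x \<le> M * (norm x)^2)"
proof -
  define Q where "Q = {inner (S x) x | x. norm x = 1}"
  obtain x0 :: 'a where "x0 \<noteq> 0" using nt by blast
  then have "norm ((1 / norm x0) *\<^sub>R x0) = 1" by simp
  then have Qne: "Q \<noteq> {}" unfolding Q_def by blast
  obtain K where K: "K > 0" "\<And>y. norm (S y) \<le> K * norm y" using bop_bound[OF S] by blast
  have Qbdd: "bdd_above Q"
  proof (rule bdd_aboveI)
    fix q assume "q \<in> Q"
    then obtain x where x: "norm x = 1" "q = inner (S x) x" unfolding Q_def by blast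
    have "q \<le> norm (S x) * norm x" unfolding x(2) by (rule norm_cauchy_schwarz)
    also have "\<dots> \<le> K" using K(2)[of x] x(1) by simp
    finally show "q \<le> K" .
  qed
  define M where "M = Sup Q"
  have symS: "inner (S x) y = inner x (S y)" for x y by (rule has_adj_inner[OF sa])
  have upper: "inner (S x) x \<le> M * (norm x)^2" for x
  proof (cases "x = 0")
    case True then show ?thesis by (simp add: bop_zero[OF S])
  next
    case False
    define u where "u = (1 / norm x) *\<^sub>R x"
    have "norm u = 1" unfolding u_def using False by simp
    then have "inner (S u) u \<in> Q" unfolding Q_def by blast
    then have "inner (S u) u \<le> M" unfolding M_def using Qbdd by (rule cSup_upper)
    moreover have "inner (S u) u = inner (S x) x / (norm x)^2"
      unfolding u_def by (simp add: bop_scaleR[OF S] power2_eq_square)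
    ultimately show ?thesis using False by (simp add: divide_le_eq)
  qed
  have "complex_of_real M \<in> op_spectrum S"
  proof (rule ccontr)
    assume "complex_of_real M \<notin> op_spectrum S"
    then have inv1: "inv_op (\<lambda>x. S x - scaleC (complex_of_real M) x)" unfolding op_spectrum_alt by simp
    define P where "P = (\<lambda>x. scaleC (-1) (S x - scaleC (complex_of_real M) x))"
    have bop1: "bounded_op (\<lambda>x. S x - scaleC (complex_of_real M) x)" by (rule bop_minus_op[OF S bop_scal])
    have Pb: "bounded_op P" unfolding P_def by (rule bop_smult[OF bop1])
    have Pinv: "inv_op P" unfolding P_def by (rule inv_op_smult[OF inv1 _ bop1]) simp
    have Px: "P x = M *\<^sub>R x - S x" for x
      unfolding P_def by (simp add: scaleC_minus_left scaleC_of_real)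
    have Psym: "inner (P x) y = inner x (P y)" for x y
      by (simp add: Px inner_diff_left inner_diff_right symS)
    have Ppos: "inner (P x) x \<ge> 0" for x
      using upper[of x] by (simp add: Px inner_diff_left power2_norm_eq_inner)
    obtain \<delta> where d: "\<delta> > 0" "\<And>x. \<delta> * (norm x)^2 \<le> inner (P x) x"
      using pos_inv_bound[OF Pb Psym Ppos Pinv] by blast
    have "Sup Q \<le> M - \<delta>"
    proof (rule cSup_least[OF Qne])
      fix q assume "q \<in> Q"
      then obtain x where x: "norm x = 1" "q = inner (S x) x" unfolding Q_def by blast
      have "\<delta> \<le> M - inner (S x) x" using d(2)[of x] x(1)
        by (simp add: Px inner_diff_left power2_norm_eq_inner[symmetric])
      then show "q \<le> M - \<delta>" using x(2) by simp
    qed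
    then show False using d(1) unfolding M_def by simp
  qed
  then show ?thesis using upper by blast
qed

lemma selfadj_zero_spec:
  fixes S :: "'a::complex_hilbert \<Rightarrow> 'a"
  assumes S: "bounded_op S" and sa: "has_adj S S" and sp: "op_spectrum S \<subseteq> {0}"
  shows "S = (\<lambda>x. 0)"
proof (cases "\<exists>x::'a. x \<noteq> 0")
  case False
  then show ?thesis by auto
next
  case nt: True
  have symS: "inner (S x) y = inner x (S y)" for x y by (rule has_adj_inner[OF sa])
  obtain M where M: "complex_of_real M \<in> op_spectrum S" "\<forall>x. inner (S x) x \<le> M * (norm x)^2"
    using sup_in_spec[OF S sa nt] by blast
  have "M = 0" using M(1) sp by auto
  then have le: "inner (S x) x \<le> 0" for x using M(2) by simp
  define S' where "S' = (\<lambda>x. scaleC (-1) (S x))"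
  have S'b: "bounded_op S'" unfolding S'_def by (rule bop_smult[OF S])
  have S'a: "has_adj S' S'" unfolding S'_def using has_adj_smult[OF sa, of "-1"] by simp
  have "op_spectrum S' \<subseteq> {0}"
  proof
    fix l assume l: "l \<in> op_spectrum S'"
    show "l \<in> {0}"
    proof (rule ccontr)
      assume "l \<notin> {0}"
      then have "-l \<notin> op_spectrum S" using sp by auto
      then have i1: "inv_op (\<lambda>x. S x - scaleC (-l) x)" unfolding op_spectrum_alt by simp
      have b1: "bounded_op (\<lambda>x. S x - scaleC (-l) x)" by (rule bop_minus_op[OF S bop_scal])
      have "inv_op (\<lambda>x. scaleC (-1) (S x - scaleC (-l) x))" by (rule inv_op_smult[OF i1 _ b1]) simp
      moreover have "(\<lambda>x. scaleC (-1) (S x - scaleC (-l) x)) = (\<lambda>x. S' x - scaleC l x)"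
        unfolding S'_def by (simp add: fun_eq_iff scaleC_minus_left scaleC_diff_right)
      ultimately have "l \<notin> op_spectrum S'" unfolding op_spectrum_alt by simp
      then show False using l by simp
    qed
  qed
  then obtain M' where M': "complex_of_real M' \<in> op_spectrum S'" "\<forall>x. inner (S' x) x \<le> M' * (norm x)^2"
    using sup_in_spec[OF S'b S'a nt] by blast
  have "M' = 0" using M'(1) \<open>op_spectrum S' \<subseteq> {0}\<close> by auto
  then have ge: "inner (S x) x \<ge> 0" for x using M'(2)[rule_format, of x]
    unfolding S'_def by (simp add: scaleC_minus_left)
  have q0: "inner (S x) x = 0" for x using le[of x] ge[of x] by simp
  show ?thesis
  proof (rule ext)
    fix x
    have "inner (S (x + S x)) (x + S x) = 0" by (rule q0)
    then have "inner (S x) (S x) + inner (S (S x)) x = 0"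
      by (simp add: bop_add[OF S] inner_add_left inner_add_right q0)
    moreover have "inner (S (S x)) x = inner (S x) (S x)" using symS[of "S x" x] by (simp add: inner_commute)
    ultimately have "inner (S x) (S x) = 0" by simp
    then show "S x = 0" by simp
  qed
qed



definition lag :: "complex set \<Rightarrow> complex \<Rightarrow> complex poly" where
  "lag Rs \<rho> = smult (inverse (\<Prod>\<rho>'\<in>Rs-{\<rho>}. (\<rho> - \<rho>'))) (\<Prod>\<rho>'\<in>Rs-{\<rho>}. [:-\<rho>', 1:])"

definition mpol :: "complex set \<Rightarrow> complex poly" where
  "mpol Rs = (\<Prod>\<rho>\<in>Rs. [:-\<rho>, 1:])"

lemma poly_lag: assumes "finite Rs" "\<rho> \<in> Rs" "\<rho>' \<in> Rs"
  shows "poly (lag Rs \<rho>) \<rho>' = (if \<rho>' = \<rho> then 1 else 0)"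
proof (cases "\<rho>' = \<rho>")
  case True
  have "(\<Prod>r\<in>Rs-{\<rho>}. (\<rho> - r)) \<noteq> 0" using assms by (simp add: prod_zero_iff)
  then show ?thesis using True unfolding lag_def by (simp add: poly_prod)
next
  case False
  then have "(\<Prod>r\<in>Rs-{\<rho>}. poly [:-r, 1:] \<rho>') = 0" using assms
    by (intro prod_zero) auto
  then show ?thesis using False unfolding lag_def by (simp add: poly_prod)
qed

lemma degree_lag: assumes "finite Rs" "\<rho> \<in> Rs" shows "degree (lag Rs \<rho>) \<le> card Rs - 1"
proof -
  have "degree (lag Rs \<rho>) \<le> degree (\<Prod>\<rho>'\<in>Rs-{\<rho>}. [:-\<rho>', 1:])" unfolding lag_def by (rule degree_smult_le)
  also have "\<dots> \<le> (\<Sum>\<rho>'\<in>Rs-{\<rho>}. degree [:-\<rho>', 1:])"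
    using degree_prod_sum_le[of "Rs-{\<rho>}" "\<lambda>\<rho>'. [:-\<rho>', 1:]"] assms by (simp add: comp_def)
  also have "\<dots> = card (Rs - {\<rho>})" by simp
  also have "\<dots> \<le> card Rs - 1" using assms by (simp add: card_Diff_singleton_if)
  finally show ?thesis .
qed

lemma sum_lag: assumes fin: "finite Rs" and ne: "Rs \<noteq> {}"
  shows "(\<Sum>\<rho>\<in>Rs. lag Rs \<rho>) = 1"
proof (rule ccontr)
  define L where "L = (\<Sum>\<rho>\<in>Rs. lag Rs \<rho>) - 1"
  assume "(\<Sum>\<rho>\<in>Rs. lag Rs \<rho>) \<noteq> 1"
  then have L0: "L \<noteq> 0" unfolding L_def by simp
  have dL: "degree L \<le> card Rs - 1" unfolding L_def
    by (intro degree_diff_le degree_sum_le fin degree_lag) auto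
  have roots: "Rs \<subseteq> {x. poly L x = 0}"
  proof
    fix r assume r: "r \<in> Rs"
    have "(\<Sum>\<rho>\<in>Rs. poly (lag Rs \<rho>) r) = (\<Sum>\<rho>\<in>Rs. if r = \<rho> then 1 else 0)"
      using fin r by (intro sum.cong refl) (simp add: poly_lag)
    also have "\<dots> = 1" using fin r by simp
    finally show "r \<in> {x. poly L x = 0}" unfolding L_def by (simp add: poly_sum)
  qed
  have "card Rs \<le> card {x. poly L x = 0}" by (rule card_mono[OF poly_roots_finite[OF L0] roots])
  also have "\<dots> \<le> degree L" by (rule card_poly_roots_bound[OF L0])
  finally show False using dL ne fin by (simp add: card_gt_0_iff) (metis One_nat_def card_gt_0_iff diff_less le_trans less_one not_le ne fin)
qed

lemma lag_mult: assumes "finite Rs" "\<rho> \<in> Rs"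
  shows "[:-\<rho>, 1:] * lag Rs \<rho> = smult (inverse (\<Prod>\<rho>'\<in>Rs-{\<rho>}. (\<rho> - \<rho>'))) (mpol Rs)"
  unfolding lag_def mpol_def using assms by (simp add: prod.remove[of Rs \<rho>] mult_smult_right)

lemma mpol_root: "finite Rs \<Longrightarrow> \<rho> \<in> Rs \<Longrightarrow> poly (mpol Rs) \<rho> = 0"
  unfolding mpol_def by (simp add: poly_prod prod_zero_iff)

lemma mpol_degree: "finite Rs \<Longrightarrow> degree (mpol Rs) = card Rs"
  unfolding mpol_def by (subst degree_prod_sum_eq) auto

lemma mpol_real: assumes fin: "finite Rs" and cj: "cnj ` Rs = Rs"
  shows "cnj (coeff (mpol Rs) i) = coeff (mpol Rs) i"
proof -
  have "poly (map_poly cnj (mpol Rs)) x = poly (mpol Rs) x" for x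
  proof -
    have "poly (map_poly cnj (mpol Rs)) x = (\<Prod>\<rho>\<in>Rs. x - cnj \<rho>)"
      unfolding mpol_def by (simp add: poly_prod)
    also have "\<dots> = (\<Prod>\<rho>\<in>cnj ` Rs. x - \<rho>)"
      by (subst prod.reindex) (auto simp: inj_on_def)
    also have "\<dots> = poly (mpol Rs) x" unfolding mpol_def cj by (simp add: poly_prod)
    finally show ?thesis .
  qed
  then have "map_poly cnj (mpol Rs) = mpol Rs" using poly_eq_poly_eq_iff by blast
  then have "coeff (map_poly cnj (mpol Rs)) i = coeff (mpol Rs) i" by simp
  then show ?thesis by (simp add: coeff_map_poly)
qed



lemma eig_orth:
  fixes T :: "'a::complex_hilbert \<Rightarrow> 'a"
  assumes "has_adj T T" "T u = scaleC a u" "T v = scaleC b v"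
  shows "(cnj a - b) * cinner u v = 0"
proof -
  have "cinner (T u) v = cinner u (T v)" using assms(1) by (rule has_adjD)
  then have "cnj a * cinner u v = b * cinner u v"
    using assms by (simp add: cinner_scaleC_left cinner_scaleC_right)
  then show ?thesis by (simp add: algebra_simps)
qed

lemma sum_single:
  assumes "finite I" "i \<in> I" "\<And>j. j \<in> I \<Longrightarrow> j \<noteq> i \<Longrightarrow> f j = 0"
  shows "sum f I = f i"
proof -
  have "sum f I = f i + sum f (I - {i})" using assms by (simp add: sum.remove)
  also have "sum f (I - {i}) = 0" using assms by (intro sum.neutral) auto
  finally show ?thesis by simp
qed

lemma decomp:
  fixes T :: "'a::complex_hilbert \<Rightarrow> 'a" and A :: "('a \<Rightarrow> 'a) set"
  assumes A: "star_subalgebra A" and TA: "T \<in> A" and sa: "adj T = T"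
    and fin: "finite (op_spectrum T)"
  shows "\<exists>R e. finite R \<and>
     (\<forall>\<rho>\<in>R. \<rho> \<in> \<real> \<and> \<rho> \<noteq> 0 \<and> e \<rho> \<in> A \<and> is_projection (e \<rho>)) \<and>
     (\<forall>\<rho>\<in>R. \<forall>\<rho>'\<in>R. \<rho> \<noteq> \<rho>' \<longrightarrow> (\<forall>x. e \<rho> (e \<rho>' x) = 0)) \<and>
     (\<forall>x. T x = (\<Sum>\<rho>\<in>R. scaleC \<rho> (e \<rho> x)))"
proof -
  have Tb: "bounded_op T" using A TA unfolding star_subalgebra_def BH_def by blast
  have Ta: "has_adj T T" using adj_exists[OF Tb] sa by simp
  show ?thesis
  proof (cases "\<exists>x::'a. x \<noteq> 0")
    case False
    then show ?thesis by (intro exI[of _ "{}"]) auto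
  next
    case nt: True
    define \<sigma> where "\<sigma> = op_spectrum T"
    define Rs where "Rs = \<sigma> \<union> cnj ` \<sigma>"
    have finRs: "finite Rs" unfolding Rs_def \<sigma>_def using fin by simp
    obtain M where "complex_of_real M \<in> \<sigma>" using sup_in_spec[OF Tb Ta nt] unfolding \<sigma>_def by blast
    then have neRs: "Rs \<noteq> {}" unfolding Rs_def by blast
    have cjRs: "cnj ` Rs = Rs"
    proof
      show "cnj ` Rs \<subseteq> Rs" unfolding Rs_def by auto
      show "Rs \<subseteq> cnj ` Rs"
      proof
        fix z assume "z \<in> Rs"
        then have "cnj z \<in> Rs" unfolding Rs_def by auto
        then show "z \<in> cnj ` Rs" by (metis complex_cnj_cnj image_eqI)
      qed
    qed
    define m where "m = mpol Rs"
    have mreal: "\<forall>i. cnj (coeff m i) = coeff m i" unfolding m_def using mpol_real[OF finRs cjRs] by blast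
    have mdeg: "degree m \<ge> 1" unfolding m_def using mpol_degree[OF finRs] finRs neRs
      by (simp add: Suc_le_eq card_gt_0_iff)
    have mzero: "peval m T = (\<lambda>x. 0)"
    proof (rule selfadj_zero_spec)
      show "bounded_op (peval m T)" by (rule peval_bop[OF Tb])
      show "has_adj (peval m T) (peval m T)" by (rule peval_selfadj[OF Tb Ta mreal])
      show "op_spectrum (peval m T) \<subseteq> {0}"
      proof
        fix \<mu> assume mu: "\<mu> \<in> op_spectrum (peval m T)"
        show "\<mu> \<in> {0}"
        proof (rule ccontr)
          assume "\<mu> \<notin> {0}"
          then have "\<forall>z\<in>op_spectrum T. poly m z \<noteq> \<mu>"
            unfolding m_def using mpol_root[OF finRs] unfolding Rs_def \<sigma>_def by auto
          then have "inv_op (\<lambda>x. peval m T x - scaleC \<mu> x)" by (rule spec_map[OF Tb mdeg])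
          then show False using mu unfolding op_spectrum_alt by simp
        qed
      qed
    qed
    define e where "e = (\<lambda>\<rho>. peval (lag Rs \<rho>) T)"
    have eb: "bounded_op (e \<rho>)" for \<rho> unfolding e_def by (rule peval_bop[OF Tb])
    have esum: "(\<Sum>\<rho>\<in>Rs. e \<rho> x) = x" for x
      unfolding e_def using peval_sum[OF Tb, of "lag Rs" Rs x, symmetric] sum_lag[OF finRs neRs]
      by (simp add: peval_one[OF Tb])
    have eeig: "T (e \<rho> x) = scaleC \<rho> (e \<rho> x)" if "\<rho> \<in> Rs" for \<rho> x
    proof -
      have "peval ([:-\<rho>, 1:] * lag Rs \<rho>) T x = 0"
        unfolding lag_mult[OF finRs that] by (simp add: peval_smult[OF Tb] m_def[symmetric] mzero)
      then have "T (e \<rho> x) - scaleC \<rho> (e \<rho> x) = 0"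
        unfolding e_def by (simp only: peval_mult[OF Tb] peval_linear[OF Tb])
      then show ?thesis by simp
    qed
    have ee: "e \<rho> (e \<rho>' x) = (if \<rho>' = \<rho> then e \<rho>' x else 0)" if "\<rho> \<in> Rs" "\<rho>' \<in> Rs" for \<rho> \<rho>' x
      using peval_eigen[OF Tb eeig[OF that(2)], of "lag Rs \<rho>"] poly_lag[OF finRs that]
      unfolding e_def by simp
    have enr: "e \<rho> x = 0" if "\<rho> \<in> Rs" "\<rho> \<notin> \<real>" for \<rho> x
    proof -
      have "(cnj \<rho> - \<rho>) * cinner (e \<rho> x) (e \<rho> x) = 0"
        by (rule eig_orth[OF Ta eeig[OF that(1)] eeig[OF that(1)]])
      moreover have "cnj \<rho> \<noteq> \<rho>" using that(2) Reals_cnj_iff by metis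
      ultimately show ?thesis by (simp add: cinner_self_eq_0)
    qed
    have orth: "cinner (e \<rho> x) (e \<rho>' y) = 0" if "\<rho> \<in> Rs" "\<rho>' \<in> Rs" "\<rho> \<noteq> \<rho>'" for \<rho> \<rho>' x y
    proof (cases "\<rho> \<in> \<real>")
      case False then show ?thesis using enr[OF that(1)] by simp
    next
      case True
      then have "cnj \<rho> = \<rho>" using Reals_cnj_iff by metis
      then have "(\<rho> - \<rho>') * cinner (e \<rho> x) (e \<rho>' y) = 0"
        using eig_orth[OF Ta eeig[OF that(1)] eeig[OF that(2)]] by simp
      then show ?thesis using that(3) by simp
    qed
    have eadj: "has_adj (e \<rho>) (e \<rho>)" if "\<rho> \<in> Rs" for \<rho>
      unfolding has_adj_def
    proof (intro allI)
      fix x y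
      have "cinner (e \<rho> x) y = cinner (e \<rho> x) (\<Sum>\<rho>'\<in>Rs. e \<rho>' y)" by (simp add: esum)
      also have "\<dots> = (\<Sum>\<rho>'\<in>Rs. cinner (e \<rho> x) (e \<rho>' y))" by (rule cinner_sum_right)
      also have "\<dots> = cinner (e \<rho> x) (e \<rho> y)"
        by (rule sum_single[OF finRs that]) (use orth that in auto)
      also have "\<dots> = (\<Sum>\<rho>'\<in>Rs. cinner (e \<rho>' x) (e \<rho> y))"
        by (rule sum_single[OF finRs that, symmetric]) (use orth that in auto)
      also have "\<dots> = cinner (\<Sum>\<rho>'\<in>Rs. e \<rho>' x) (e \<rho> y)" by (rule cinner_sum_left[symmetric])
      also have "\<dots> = cinner x (e \<rho> y)" by (simp add: esum)
      finally show "cinner (e \<rho> x) y = cinner x (e \<rho> y)" .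
    qed
    define R where "R = {\<rho>\<in>Rs. \<rho> \<in> \<real> \<and> \<rho> \<noteq> 0}"
    have finR: "finite R" unfolding R_def using finRs by simp
    have RRs: "R \<subseteq> Rs" unfolding R_def by blast
    show ?thesis
    proof (intro exI[of _ R] exI[of _ e] conjI ballI allI impI)
      show "finite R" by (rule finR)
    next
      fix \<rho> assume r: "\<rho> \<in> R"
      then have rRs: "\<rho> \<in> Rs" and rnz: "\<rho> \<noteq> 0" and "\<rho> \<in> \<real>" unfolding R_def by auto
      then show "\<rho> \<in> \<real>" "\<rho> \<noteq> 0" by auto
      have "(\<lambda>x. T (peval (lag Rs \<rho>) T x)) \<in> A" by (rule peval_inA[OF Tb A TA])
      then have "(\<lambda>x. scaleC (inverse \<rho>) (T (peval (lag Rs \<rho>) T x))) \<in> A"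
        using A unfolding star_subalgebra_def by (simp only:)
      moreover have "(\<lambda>x. scaleC (inverse \<rho>) (T (peval (lag Rs \<rho>) T x))) = e \<rho>"
        using eeig[OF rRs] rnz unfolding e_def by (simp add: fun_eq_iff scaleC_scaleC)
      ultimately show "e \<rho> \<in> A" by simp
      show "is_projection (e \<rho>)" unfolding is_projection_def
      proof
        show "e \<rho> \<circ> e \<rho> = e \<rho>" using ee[OF rRs rRs] by (simp add: fun_eq_iff)
        show "adj (e \<rho>) = e \<rho>" by (rule adj_unique[OF eadj[OF rRs]])
      qed
    next
      fix \<rho> \<rho>' x assume "\<rho> \<in> R" "\<rho>' \<in> R" "\<rho> \<noteq> \<rho>'"
      then show "e \<rho> (e \<rho>' x) = 0" using ee[of \<rho> \<rho>' x] RRs by auto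
    next
      fix x
      have "T x = T (\<Sum>\<rho>\<in>Rs. e \<rho> x)" by (simp add: esum)
      also have "\<dots> = (\<Sum>\<rho>\<in>Rs. scaleC \<rho> (e \<rho> x))" by (simp add: bop_sum[OF Tb] eeig)
      also have "\<dots> = (\<Sum>\<rho>\<in>R. scaleC \<rho> (e \<rho> x))"
      proof (rule sum.mono_neutral_right[OF finRs RRs])
        show "\<forall>i\<in>Rs - R. scaleC i (e i x) = 0" unfolding R_def using enr by (metis (mono_tags, lifting) DiffE mem_Collect_eq scaleC_zero_left scaleC_zero_right)
      qed
      finally show "T x = (\<Sum>\<rho>\<in>R. scaleC \<rho> (e \<rho> x))" .
    qed
  qed
qed



lemma sq_ident:
  fixes a b :: "'a::complex_hilbert \<Rightarrow> 'a"
  assumes a: "bounded_op a" and b: "bounded_op b"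
  shows "(a (a z + scaleC \<i> (b z)) + scaleC \<i> (b (a z + scaleC \<i> (b z)))) =
    a (a z) + scaleC (-1) (b (b z)) + scaleC \<i> ((a (a z + b z) + b (a z + b z)) + scaleC (-1) (a (a z)) + scaleC (-1) (b (b z)))"
  by (simp add: bop_add[OF a] bop_add[OF b] bop_scaleC[OF a] bop_scaleC[OF b] scaleC_add_right
      scaleC_scaleC scaleC_minus_left scaleC_minus_right algebra_simps)

lemma comb2: fixes u v :: "'a::complex_inner"
  shows "scaleC a u + scaleC b v + (scaleC c u + scaleC d v) = scaleC (a + c) u + scaleC (b + d) v"
  by (simp add: scaleC_add_left algebra_simps)

lemma sq_sum:
  fixes E :: "complex \<Rightarrow> 'a::complex_hilbert \<Rightarrow> 'a"
  assumes fin: "finite R" and Eb: "\<And>\<rho>. \<rho> \<in> R \<Longrightarrow> bounded_op (E \<rho>)"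
    and EE: "\<And>\<rho> \<rho>'. \<rho> \<in> R \<Longrightarrow> \<rho>' \<in> R \<Longrightarrow> E \<rho> (E \<rho>' x) = (if \<rho> = \<rho>' then E \<rho> x else 0)"
  shows "(\<Sum>\<rho>\<in>R. scaleC \<rho> (E \<rho> (\<Sum>\<rho>'\<in>R. scaleC \<rho>' (E \<rho>' x)))) = (\<Sum>\<rho>\<in>R. scaleC (\<rho> * \<rho>) (E \<rho> x))"
proof (rule sum.cong[OF refl])
  fix \<rho> assume r: "\<rho> \<in> R"
  have "E \<rho> (\<Sum>\<rho>'\<in>R. scaleC \<rho>' (E \<rho>' x)) = (\<Sum>\<rho>'\<in>R. scaleC \<rho>' (E \<rho> (E \<rho>' x)))"
    by (simp add: bop_sum[OF Eb[OF r]] bop_scaleC[OF Eb[OF r]])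
  also have "\<dots> = scaleC \<rho> (E \<rho> (E \<rho> x))"
    by (rule sum_single[OF fin r]) (simp add: EE r)
  also have "\<dots> = scaleC \<rho> (E \<rho> x)" using EE[OF r r] by simp
  finally show "scaleC \<rho> (E \<rho> (\<Sum>\<rho>'\<in>R. scaleC \<rho>' (E \<rho>' x))) = scaleC (\<rho> * \<rho>) (E \<rho> x)"
    by (simp add: scaleC_scaleC)
qed

lemma proj_orth:
  fixes P Q :: "'a::complex_hilbert \<Rightarrow> 'a"
  assumes P: "bounded_op P" and Q: "bounded_op Q" and PP: "\<And>x. P (P x) = P x" and QQ: "\<And>x. Q (Q x) = Q x"
    and S: "\<And>x. P (P x + Q x) + Q (P x + Q x) = P x + Q x"
  shows "P (Q x) = 0"
proof -
  have h: "P (Q y) + Q (P y) = 0" for y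
    using S[of y] by (simp add: bop_add[OF P] bop_add[OF Q] PP QQ algebra_simps)
  have "P (P (Q x) + Q (P x)) = 0" using h[of x] bop_zero[OF P] by simp
  then have h1: "P (Q x) + P (Q (P x)) = 0" by (simp add: bop_add[OF P] PP)
  have h2: "P (Q (P x)) + Q (P x) = 0" using h[of "P x"] by (simp add: PP)
  have "P (Q x) = Q (P x)" using h1 h2 by (metis add.commute add_left_cancel)
  then have "P (Q x) + P (Q x) = 0" using h[of x] by simp
  then have "2 *\<^sub>R P (Q x) = 0" by (simp add: scaleR_2)
  then show ?thesis by simp
qed

context
  fixes A :: "('h::complex_hilbert \<Rightarrow> 'h) set"
    and B :: "('k::complex_hilbert \<Rightarrow> 'k) set"
    and \<phi> :: "('h \<Rightarrow> 'h) \<Rightarrow> ('k \<Rightarrow> 'k)"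
  assumes RA: "R_star_algebra A" and RB: "R_star_algebra B"
    and AB: "\<forall>T\<in>A. \<phi> T \<in> B"
    and lin: "linear_on_ops A \<phi>"
    and pp: "\<forall>p\<in>A. is_projection p \<longrightarrow> is_projection (\<phi> p)"
begin

lemma sA: "star_subalgebra A" using RA unfolding R_star_algebra_def by blast
lemma sB: "star_subalgebra B" using RB unfolding R_star_algebra_def by blast

lemma A_add: "S \<in> A \<Longrightarrow> T \<in> A \<Longrightarrow> (\<lambda>x. S x + T x) \<in> A"
  using sA unfolding star_subalgebra_def by blast
lemma A_sc: "T \<in> A \<Longrightarrow> (\<lambda>x. scaleC c (T x)) \<in> A"
  using sA unfolding star_subalgebra_def by blast
lemma A_comp: "S \<in> A \<Longrightarrow> T \<in> A \<Longrightarrow> S \<circ> T \<in> A"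
  using sA unfolding star_subalgebra_def by blast
lemma A_comp': "S \<in> A \<Longrightarrow> T \<in> A \<Longrightarrow> (\<lambda>x. S (T x)) \<in> A"
  using A_comp by (simp add: comp_def)
lemma A_adj: "T \<in> A \<Longrightarrow> adj T \<in> A"
  using sA unfolding star_subalgebra_def by blast
lemma A_zero: "(\<lambda>x. 0) \<in> A"
  using sA unfolding star_subalgebra_def by blast
lemma A_bop: "T \<in> A \<Longrightarrow> bounded_op T"
  using sA unfolding star_subalgebra_def BH_def by blast
lemma B_bop: "T \<in> B \<Longrightarrow> bounded_op T"
  using sB unfolding star_subalgebra_def BH_def by blast
lemma phiB: "T \<in> A \<Longrightarrow> bounded_op (\<phi> T)"
  using AB B_bop by blast

lemma phi_add: "S \<in> A \<Longrightarrow> T \<in> A \<Longrightarrow> \<phi> (\<lambda>x. S x + T x) = (\<lambda>y. \<phi> S y + \<phi> T y)"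
  using lin unfolding linear_on_ops_def by blast
lemma phi_sc: "T \<in> A \<Longrightarrow> \<phi> (\<lambda>x. scaleC c (T x)) = (\<lambda>y. scaleC c (\<phi> T y))"
  using lin unfolding linear_on_ops_def by blast

lemma phi_zero: "\<phi> (\<lambda>x. 0) = (\<lambda>y. 0)"
  using phi_sc[OF A_zero, of 0] by simp

lemma phi_sum: "finite I \<Longrightarrow> (\<And>i. i \<in> I \<Longrightarrow> f i \<in> A) \<Longrightarrow>
   (\<lambda>x. \<Sum>i\<in>I. scaleC (c i) (f i x)) \<in> A \<and>
   \<phi> (\<lambda>x. \<Sum>i\<in>I. scaleC (c i) (f i x)) = (\<lambda>y. \<Sum>i\<in>I. scaleC (c i) (\<phi> (f i) y))"
proof (induction I rule: finite_induct)
  case empty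
  then show ?case using A_zero phi_zero by simp
next
  case (insert i I)
  have fi: "f i \<in> A" using insert by simp
  have IH: "(\<lambda>x. \<Sum>i\<in>I. scaleC (c i) (f i x)) \<in> A"
    "\<phi> (\<lambda>x. \<Sum>i\<in>I. scaleC (c i) (f i x)) = (\<lambda>y. \<Sum>i\<in>I. scaleC (c i) (\<phi> (f i) y))"
    using insert by auto
  have eq: "(\<lambda>x. \<Sum>j\<in>insert i I. scaleC (c j) (f j x)) =
      (\<lambda>x. scaleC (c i) (f i x) + (\<Sum>j\<in>I. scaleC (c j) (f j x)))"
    using insert by simp
  show ?case unfolding eq
    using A_add[OF A_sc[OF fi] IH(1)] phi_add[OF A_sc[OF fi] IH(1)] phi_sc[OF fi] IH(2) insert
    by simp
qed

lemma jordan_sa: assumes TA: "T \<in> A" and sa: "adj T = T"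
  shows "adj (\<phi> T) = \<phi> T \<and> \<phi> (T \<circ> T) = \<phi> T \<circ> \<phi> T"
proof -
  have fin: "finite (op_spectrum T)" using RA TA sa unfolding R_star_algebra_def by blast
  obtain R e where R: "finite R"
    "\<forall>\<rho>\<in>R. \<rho> \<in> \<real> \<and> \<rho> \<noteq> 0 \<and> e \<rho> \<in> A \<and> is_projection (e \<rho>)"
    "\<forall>\<rho>\<in>R. \<forall>\<rho>'\<in>R. \<rho> \<noteq> \<rho>' \<longrightarrow> (\<forall>x. e \<rho> (e \<rho>' x) = 0)"
    "\<forall>x. T x = (\<Sum>\<rho>\<in>R. scaleC \<rho> (e \<rho> x))"
    using decomp[OF sA TA sa fin] by blast
  have eA: "e \<rho> \<in> A" if "\<rho> \<in> R" for \<rho> using R(2) that by blast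
  have eb: "bounded_op (e \<rho>)" if "\<rho> \<in> R" for \<rho> using A_bop[OF eA[OF that]] .
  have eproj: "is_projection (e \<rho>)" if "\<rho> \<in> R" for \<rho> using R(2) that by blast
  have eid: "e \<rho> (e \<rho> x) = e \<rho> x" if "\<rho> \<in> R" for \<rho> x
    using eproj[OF that] unfolding is_projection_def by (metis comp_apply)
  have ee: "e \<rho> (e \<rho>' x) = (if \<rho> = \<rho>' then e \<rho> x else 0)" if "\<rho> \<in> R" "\<rho>' \<in> R" for \<rho> \<rho>' x
    using R(3) that eid by auto
  have ereal: "cnj \<rho> = \<rho>" if "\<rho> \<in> R" for \<rho> using R(2) that Reals_cnj_iff by metis
  have Teq: "T = (\<lambda>x. \<Sum>\<rho>\<in>R. scaleC \<rho> (e \<rho> x))" using R(4) by blast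
  define P where "P = (\<lambda>\<rho>. \<phi> (e \<rho>))"
  have Pb: "bounded_op (P \<rho>)" if "\<rho> \<in> R" for \<rho> unfolding P_def by (rule phiB[OF eA[OF that]])
  have Pproj: "is_projection (P \<rho>)" if "\<rho> \<in> R" for \<rho> unfolding P_def using pp eA[OF that] eproj[OF that] by blast
  have Pid: "P \<rho> (P \<rho> x) = P \<rho> x" if "\<rho> \<in> R" for \<rho> x
    using Pproj[OF that] unfolding is_projection_def by (metis comp_apply)
  have Padj: "has_adj (P \<rho>) (P \<rho>)" if "\<rho> \<in> R" for \<rho>
    using adj_exists[OF Pb[OF that]] Pproj[OF that] unfolding is_projection_def by simp
  have eadj: "has_adj (e \<rho>) (e \<rho>)" if "\<rho> \<in> R" for \<rho>
    using adj_exists[OF eb[OF that]] eproj[OF that] unfolding is_projection_def by simp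
  have PP: "P \<rho> (P \<rho>' x) = (if \<rho> = \<rho>' then P \<rho> x else 0)" if "\<rho> \<in> R" "\<rho>' \<in> R" for \<rho> \<rho>' x
  proof (cases "\<rho> = \<rho>'")
    case True then show ?thesis using Pid that by simp
  next
    case False
    define s where "s = (\<lambda>x. e \<rho> x + e \<rho>' x)"
    have sA': "s \<in> A" unfolding s_def by (rule A_add[OF eA[OF that(1)] eA[OF that(2)]])
    have "s \<circ> s = s" unfolding s_def using ee[OF that(1) that(1)] ee[OF that(1) that(2)]
        ee[OF that(2) that(1)] ee[OF that(2) that(2)] False
      by (simp add: fun_eq_iff bop_add[OF eb[OF that(1)]] bop_add[OF eb[OF that(2)]])
    moreover have "adj s = s" unfolding s_def
      by (rule adj_unique[OF has_adj_plus[OF eadj[OF that(1)] eadj[OF that(2)]]])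
    ultimately have "is_projection s" unfolding is_projection_def by simp
    then have "is_projection (\<phi> s)" using pp sA' by blast
    moreover have "\<phi> s = (\<lambda>y. P \<rho> y + P \<rho>' y)" unfolding s_def P_def
      by (rule phi_add[OF eA[OF that(1)] eA[OF that(2)]])
    ultimately have "(\<lambda>y. P \<rho> y + P \<rho>' y) \<circ> (\<lambda>y. P \<rho> y + P \<rho>' y) = (\<lambda>y. P \<rho> y + P \<rho>' y)"
      unfolding is_projection_def by simp
    then have "P \<rho> (P \<rho> y + P \<rho>' y) + P \<rho>' (P \<rho> y + P \<rho>' y) = P \<rho> y + P \<rho>' y" for y
      by (metis comp_apply)
    then show ?thesis using proj_orth[OF Pb[OF that(1)] Pb[OF that(2)] Pid[OF that(1)] Pid[OF that(2)]] False
      by simp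
  qed
  have phiT: "\<phi> T = (\<lambda>y. \<Sum>\<rho>\<in>R. scaleC \<rho> (P \<rho> y))"
    unfolding Teq P_def using phi_sum[OF R(1) eA, where c = "\<lambda>\<rho>. \<rho>"] by simp
  have TT: "T \<circ> T = (\<lambda>x. \<Sum>\<rho>\<in>R. scaleC (\<rho> * \<rho>) (e \<rho> x))"
    unfolding Teq comp_def using sq_sum[OF R(1) eb ee] by simp
  have phiTT: "\<phi> (T \<circ> T) = (\<lambda>y. \<Sum>\<rho>\<in>R. scaleC (\<rho> * \<rho>) (P \<rho> y))"
    unfolding TT P_def using phi_sum[OF R(1) eA, where c = "\<lambda>\<rho>. \<rho> * \<rho>"] by simp
  have "\<phi> T \<circ> \<phi> T = (\<lambda>y. \<Sum>\<rho>\<in>R. scaleC (\<rho> * \<rho>) (P \<rho> y))"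
    unfolding phiT comp_def using sq_sum[OF R(1) Pb PP] by simp
  then have sq: "\<phi> (T \<circ> T) = \<phi> T \<circ> \<phi> T" using phiTT by simp
  have "has_adj (\<lambda>y. \<Sum>\<rho>\<in>R. scaleC \<rho> (P \<rho> y)) (\<lambda>y. \<Sum>\<rho>\<in>R. scaleC (cnj \<rho>) (P \<rho> y))"
    by (rule has_adj_sum) (rule has_adj_smult[OF Padj])
  moreover have "(\<lambda>y. \<Sum>\<rho>\<in>R. scaleC (cnj \<rho>) (P \<rho> y)) = (\<lambda>y. \<Sum>\<rho>\<in>R. scaleC \<rho> (P \<rho> y))"
    using ereal by (simp add: fun_eq_iff)
  ultimately have "adj (\<phi> T) = \<phi> T" unfolding phiT using adj_unique by metis
  with sq show ?thesis by simp
qed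

lemma main_jordan: assumes xA: "x \<in> A"
  shows "\<phi> (adj x) = adj (\<phi> x) \<and> \<phi> (x \<circ> x) = \<phi> x \<circ> \<phi> x"
proof -
  have xb: "bounded_op x" by (rule A_bop[OF xA])
  have xa: "has_adj x (adj x)" by (rule adj_exists[OF xb])
  have xa': "has_adj (adj x) x" by (rule has_adj_sym[OF xa])
  have adjA: "adj x \<in> A" by (rule A_adj[OF xA])
  define a where "a = (\<lambda>z. scaleC (1/2) (x z) + scaleC (1/2) (adj x z))"
  define b where "b = (\<lambda>z. scaleC (-\<i>/2) (x z) + scaleC (\<i>/2) (adj x z))"
  have aA: "a \<in> A" unfolding a_def by (rule A_add[OF A_sc[OF xA] A_sc[OF adjA]])
  have bA: "b \<in> A" unfolding b_def by (rule A_add[OF A_sc[OF xA] A_sc[OF adjA]])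
  have ab: "bounded_op a" by (rule A_bop[OF aA])
  have bb: "bounded_op b" by (rule A_bop[OF bA])
  have "has_adj a (\<lambda>y. scaleC (cnj (1/2)) (adj x y) + scaleC (cnj (1/2)) (x y))"
    unfolding a_def by (rule has_adj_plus[OF has_adj_smult[OF xa] has_adj_smult[OF xa']])
  moreover have "(\<lambda>y. scaleC (cnj (1/2)) (adj x y) + scaleC (cnj (1/2)) (x y)) = a"
    unfolding a_def by (simp add: fun_eq_iff add.commute)
  ultimately have a_sa: "adj a = a" using adj_unique by metis
  have "has_adj b (\<lambda>y. scaleC (cnj (-\<i>/2)) (adj x y) + scaleC (cnj (\<i>/2)) (x y))"
    unfolding b_def by (rule has_adj_plus[OF has_adj_smult[OF xa] has_adj_smult[OF xa']])
  moreover have "(\<lambda>y. scaleC (cnj (-\<i>/2)) (adj x y) + scaleC (cnj (\<i>/2)) (x y)) = b"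
    unfolding b_def by (simp add: fun_eq_iff add.commute)
  ultimately have b_sa: "adj b = b" using adj_unique by metis
  have x_eq: "x = (\<lambda>z. a z + scaleC \<i> (b z))"
  proof (rule ext)
    fix z
    have "a z + scaleC \<i> (b z) = scaleC (1/2) (x z) + scaleC (1/2) (adj x z) +
        (scaleC (1/2) (x z) + scaleC (-1/2) (adj x z))"
      unfolding a_def b_def by (simp add: scaleC_add_right scaleC_scaleC)
    also have "\<dots> = x z" unfolding comb2 by simp
    finally show "x z = a z + scaleC \<i> (b z)" by simp
  qed
  have adj_eq: "adj x = (\<lambda>z. a z + scaleC (-\<i>) (b z))"
  proof (rule ext)
    fix z
    have "a z + scaleC (-\<i>) (b z) = scaleC (1/2) (x z) + scaleC (1/2) (adj x z) +
        (scaleC (-1/2) (x z) + scaleC (1/2) (adj x z))"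
      unfolding a_def b_def by (simp add: scaleC_add_right scaleC_scaleC)
    also have "\<dots> = adj x z" unfolding comb2 by simp
    finally show "adj x z = a z + scaleC (-\<i>) (b z)" by simp
  qed
  have Ja: "adj (\<phi> a) = \<phi> a \<and> \<phi> (a \<circ> a) = \<phi> a \<circ> \<phi> a" by (rule jordan_sa[OF aA a_sa])
  have Jb: "adj (\<phi> b) = \<phi> b \<and> \<phi> (b \<circ> b) = \<phi> b \<circ> \<phi> b" by (rule jordan_sa[OF bA b_sa])
  have Pab: "bounded_op (\<phi> a)" by (rule phiB[OF aA])
  have Pbb: "bounded_op (\<phi> b)" by (rule phiB[OF bA])
  have Paa: "has_adj (\<phi> a) (\<phi> a)" using adj_exists[OF Pab] Ja by simp
  have Pba: "has_adj (\<phi> b) (\<phi> b)" using adj_exists[OF Pbb] Jb by simp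
  have phix: "\<phi> x = (\<lambda>y. \<phi> a y + scaleC \<i> (\<phi> b y))"
    by (subst x_eq) (simp add: phi_add[OF aA A_sc[OF bA]] phi_sc[OF bA])
  have phiadj: "\<phi> (adj x) = (\<lambda>y. \<phi> a y + scaleC (-\<i>) (\<phi> b y))"
    by (subst adj_eq) (simp add: phi_add[OF aA A_sc[OF bA]] phi_sc[OF bA])
  have "adj (\<phi> x) = (\<lambda>y. \<phi> a y + scaleC (cnj \<i>) (\<phi> b y))"
    unfolding phix by (rule adj_unique[OF has_adj_plus[OF Paa has_adj_smult[OF Pba]]])
  then have part1: "\<phi> (adj x) = adj (\<phi> x)" unfolding phiadj by simp
  define c where "c = (\<lambda>z. a z + b z)"
  have cA: "c \<in> A" unfolding c_def by (rule A_add[OF aA bA])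
  have c_sa: "adj c = c" unfolding c_def
    using adj_unique[OF has_adj_plus[OF adj_exists[OF ab] adj_exists[OF bb]]] a_sa b_sa by simp
  have Jc: "\<phi> (c \<circ> c) = \<phi> c \<circ> \<phi> c" using jordan_sa[OF cA c_sa] by simp
  have phic: "\<phi> c = (\<lambda>y. \<phi> a y + \<phi> b y)" unfolding c_def by (rule phi_add[OF aA bA])
  define U where "U = a \<circ> a"
  define V where "V = b \<circ> b"
  define W where "W = c \<circ> c"
  have UA: "U \<in> A" unfolding U_def by (rule A_comp[OF aA aA])
  have VA: "V \<in> A" unfolding V_def by (rule A_comp[OF bA bA])
  have WA: "W \<in> A" unfolding W_def by (rule A_comp[OF cA cA])
  have xx: "x \<circ> x = (\<lambda>z. U z + scaleC (-1) (V z) + scaleC \<i> (W z + scaleC (-1) (U z) + scaleC (-1) (V z)))"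
  proof (rule ext)
    fix z
    have "(x \<circ> x) z = a (a z + scaleC \<i> (b z)) + scaleC \<i> (b (a z + scaleC \<i> (b z)))"
      by (subst (1 2) x_eq) simp
    also have "\<dots> = U z + scaleC (-1) (V z) + scaleC \<i> (W z + scaleC (-1) (U z) + scaleC (-1) (V z))"
      unfolding sq_ident[OF ab bb] U_def V_def W_def c_def by simp
    finally show "(x \<circ> x) z = U z + scaleC (-1) (V z) + scaleC \<i> (W z + scaleC (-1) (U z) + scaleC (-1) (V z))" .
  qed
  have m1: "(\<lambda>z. U z + scaleC (-1) (V z)) \<in> A" by (rule A_add[OF UA A_sc[OF VA]])
  have m2: "(\<lambda>z. W z + scaleC (-1) (U z)) \<in> A" by (rule A_add[OF WA A_sc[OF UA]])
  have m3: "(\<lambda>z. W z + scaleC (-1) (U z) + scaleC (-1) (V z)) \<in> A" by (rule A_add[OF m2 A_sc[OF VA]])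
  have "\<phi> (x \<circ> x) = (\<lambda>y. \<phi> U y + scaleC (-1) (\<phi> V y) + scaleC \<i> (\<phi> W y + scaleC (-1) (\<phi> U y) + scaleC (-1) (\<phi> V y)))"
    unfolding xx
    by (simp add: phi_add[OF m1 A_sc[OF m3]] phi_sc[OF m3] phi_add[OF UA A_sc[OF VA]] phi_sc[OF VA]
        phi_add[OF m2 A_sc[OF VA]] phi_add[OF WA A_sc[OF UA]] phi_sc[OF UA])
  also have "\<dots> = \<phi> x \<circ> \<phi> x"
  proof (rule ext)
    fix y
    have "\<phi> U y = \<phi> a (\<phi> a y)" unfolding U_def using Ja by simp
    moreover have "\<phi> V y = \<phi> b (\<phi> b y)" unfolding V_def using Jb by simp
    moreover have "\<phi> W y = \<phi> a (\<phi> a y + \<phi> b y) + \<phi> b (\<phi> a y + \<phi> b y)"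
      unfolding W_def Jc phic by (simp add: bop_add[OF Pab] bop_add[OF Pbb])
    moreover have "(\<phi> x \<circ> \<phi> x) y = \<phi> a (\<phi> a y + scaleC \<i> (\<phi> b y)) + scaleC \<i> (\<phi> b (\<phi> a y + scaleC \<i> (\<phi> b y)))"
      unfolding phix by simp
    ultimately show "\<phi> U y + scaleC (-1) (\<phi> V y) + scaleC \<i> (\<phi> W y + scaleC (-1) (\<phi> U y) + scaleC (-1) (\<phi> V y)) = (\<phi> x \<circ> \<phi> x) y"
      unfolding sq_ident[OF Pab Pbb] by simp
  qed
  finally show ?thesis using part1 by simp
qed

end


theorem proposition8p6:
  fixes A :: "('h::complex_hilbert \<Rightarrow> 'h) set"
    and B :: "('k::complex_hilbert \<Rightarrow> 'k) set"
    and \<phi> :: "('h \<Rightarrow> 'h) \<Rightarrow> ('k \<Rightarrow> 'k)"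
  assumes "R_star_algebra A" and "R_star_algebra B"
    and "\<forall>T\<in>A. \<phi> T \<in> B"
    and "linear_on_ops A \<phi>"
    and "\<forall>p\<in>A. is_projection p \<longrightarrow> is_projection (\<phi> p)"
  shows "\<forall>x\<in>A. \<phi> (adj x) = adj (\<phi> x) \<and> \<phi> (x \<circ> x) = \<phi> x \<circ> \<phi> x"
  using main_jordan[OF assms] by blast

end
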